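(* Let $D$ be an orthogonal design of order $n$ and type $(s_1,\ldots,s_u)$ in variables $x_1,\ldots,x_u$ with $i$-th column $d_i$, let $W$ be a weighing matrix of order $n$ and weight $k$ with $i$-th column $w_i$, and put $C_i=w_id_i^\top$ for $i\in\{1,\ldots,n\}$. Let $L=(l(i,j))_{i,j=1}^n$ be a Latin square of order $n$ on the symbols $\{1,\ldots,n\}$. Then the $n^2\times n^2$ block matrix $\tilde D=(C_{l(i,j)})_{i,j=1}^n$ is an orthogonal design of order $n^2$ and type $(ks_1,\ldots,ks_u)$.
   Context: A weighing matrix of order $n$ and weight $k$ is an $n\times n$ $(0,1,-1)$-matrix $W$ with $WW^\top=kI_n$. An orthogonal design of order $n$ and type $(s_1,\ldots,s_u)$ in distinct commuting real indeterminates $x_1,\ldots,x_u$ is an $n\times n$ matrix $D$ with entries in $\{0,\pm x_1,\ldots,\pm x_u\}$ such that $DD^\top=(s_1x_1^2+\cdots+s_ux_u^2)I_n$. *)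

theory Defs
  imports Complex_Main
begin

text \<open>Matrices of order n are functions nat => nat => _ with indices in {0..<n}.
  An entry of an orthogonal design in variables x_1,...,x_u is encoded by an integer e
  with |e| <= u: e = 0 encodes the entry 0, e = t > 0 encodes +x_t and e = -t encodes -x_t.\<close>

definition od_eval :: "(nat \<Rightarrow> real) \<Rightarrow> int \<Rightarrow> real" where
  "od_eval x e = (if e = 0 then 0 else of_int (sgn e) * x (nat \<bar>e\<bar>))"

text \<open>Orthogonal design of order n and type (s_1,...,s_u): the identity D D^T = (sum s_t x_t^2) I
  holds identically in the commuting real indeterminates x_1,...,x_u, i.e. for all real values.\<close>
definition orthogonal_design ::
  "nat \<Rightarrow> nat \<Rightarrow> (nat \<Rightarrow> nat) \<Rightarrow> (nat \<Rightarrow> nat \<Rightarrow> int) \<Rightarrow> bool" where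
  "orthogonal_design n u s D \<longleftrightarrow>
     (\<forall>i<n. \<forall>j<n. \<bar>D i j\<bar> \<le> int u) \<and>
     (\<forall>x :: nat \<Rightarrow> real. \<forall>i<n. \<forall>j<n.
        (\<Sum>l<n. od_eval x (D i l) * od_eval x (D j l)) =
        (if i = j then (\<Sum>t\<in>{1..u}. real (s t) * (x t)\<^sup>2) else 0))"

definition weighing_matrix :: "nat \<Rightarrow> nat \<Rightarrow> (nat \<Rightarrow> nat \<Rightarrow> int) \<Rightarrow> bool" where
  "weighing_matrix n k W \<longleftrightarrow>
     (\<forall>i<n. \<forall>j<n. W i j \<in> {-1, 0, 1}) \<and>
     (\<forall>i<n. \<forall>j<n. (\<Sum>l<n. W i l * W j l) = (if i = j then int k else 0))"

text \<open>Latin square of order n on the symbols {0..<n} (0-based version of {1..n}).\<close>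
definition latin_square :: "nat \<Rightarrow> (nat \<Rightarrow> nat \<Rightarrow> nat) \<Rightarrow> bool" where
  "latin_square n L \<longleftrightarrow>
     (\<forall>i<n. bij_betw (\<lambda>j. L i j) {..<n} {..<n}) \<and>
     (\<forall>j<n. bij_betw (\<lambda>i. L i j) {..<n} {..<n})"

text \<open>Since W a m is in {-1,0,1}, the integer product is exactly the
  encoding of the entry W a m * (entry of D).\<close>
definition col_prod :: "(nat \<Rightarrow> nat \<Rightarrow> int) \<Rightarrow> (nat \<Rightarrow> nat \<Rightarrow> int) \<Rightarrow> nat \<Rightarrow> nat \<Rightarrow> nat \<Rightarrow> int" where
  "col_prod W D m a b = W a m * D b m"

definition latin_block :: "nat \<Rightarrow> (nat \<Rightarrow> nat \<Rightarrow> nat) \<Rightarrow> (nat \<Rightarrow> nat \<Rightarrow> int) \<Rightarrow>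
    (nat \<Rightarrow> nat \<Rightarrow> int) \<Rightarrow> nat \<Rightarrow> nat \<Rightarrow> int" where
  "latin_block n L W D r c =
     col_prod W D (L (r div n) (c div n)) (r mod n) (c mod n)"

end

theory Submission
  imports Defs "Jordan_Normal_Form.Determinant"
begin

lemma col_orth:
  fixes f :: "nat \<Rightarrow> nat \<Rightarrow> real"
  assumes h: "\<And>i j. i<n \<Longrightarrow> j<n \<Longrightarrow> (\<Sum>l<n. f i l * f j l) = (if i=j then c else 0)"
    and ij: "i<n" "j<n"
  shows "(\<Sum>l<n. f l i * f l j) = (if i=j then c else 0)"
proof (cases "c = 0")
  case True
  have z: "f a b = 0" if "a<n" "b<n" for a b
  proof -
    have "(\<Sum>l<n. (f a l)^2) = 0" using h[of a a] that True by (simp add: power2_eq_square)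
    hence "\<forall>l\<in>{..<n}. (f a l)^2 = 0" by (subst sum_nonneg_eq_0_iff[symmetric]) auto
    thus ?thesis using that by auto
  qed
  show ?thesis using z ij True by simp
next
  case False
  define A where "A = mat n n (\<lambda>(a,b). f a b)"
  define B where "B = mat n n (\<lambda>(a,b). f b a / c)"
  have A: "A \<in> carrier_mat n n" and B: "B \<in> carrier_mat n n" by (auto simp: A_def B_def)
  have "A * B = 1\<^sub>m n"
  proof (rule eq_matI)
    fix a b assume ab: "a < dim_row (1\<^sub>m n :: real mat)" "b < dim_col (1\<^sub>m n :: real mat)"
    have "(A*B) $$ (a,b) = (\<Sum>l<n. f a l * f b l) / c"
      using ab by (simp add: A_def B_def scalar_prod_def row_def col_def sum_divide_distrib lessThan_atLeast0)
    also have "\<dots> = 1\<^sub>m n $$ (a,b)" using ab h[of a b] False by simp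
    finally show "(A*B) $$ (a,b) = 1\<^sub>m n $$ (a,b)" .
  qed (auto simp: A_def B_def)
  hence BA: "B * A = 1\<^sub>m n" using mat_mult_left_right_inverse[OF A B] by blast
  have "(B*A) $$ (i,j) = (\<Sum>l<n. f l i * f l j) / c"
    using ij by (simp add: A_def B_def scalar_prod_def row_def col_def sum_divide_distrib lessThan_atLeast0 mult.commute)
  hence "(\<Sum>l<n. f l i * f l j) / c = (if i=j then 1 else 0)" using BA ij by simp
  thus ?thesis using False by (auto split: if_splits simp: field_simps)
qed

lemma split_sum:
  fixes g :: "nat \<Rightarrow> real"
  shows "(\<Sum>c<n*n. g c) = (\<Sum>j<n. \<Sum>b<n. g (j*n+b))"
proof -
  have "(\<Sum>c<n*n. g c) = (\<Sum>j<n. sum g {j*n..<j*n+n})" by (rule sum.nat_group[symmetric])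
  also have "\<dots> = (\<Sum>j<n. \<Sum>b<n. g (j*n+b))"
  proof (rule sum.cong[OF refl])
    fix j
    have "sum g {0+j*n..<n+j*n} = (\<Sum>b\<in>{0..<n}. g (b + j*n))" by (rule sum.shift_bounds_nat_ivl)
    thus "sum g {j*n..<j*n+n} = (\<Sum>b<n. g (j*n+b))" by (simp add: add.commute lessThan_atLeast0)
  qed
  finally show ?thesis .
qed

lemma ev_mult:
  assumes "w \<in> {-1,0,1::int}"
  shows "od_eval x (w*e) = of_int w * od_eval x e"
  using assms by (auto simp: od_eval_def sgn_mult abs_mult)

theorem lemma3p10:
  fixes n u k :: nat and s :: "nat \<Rightarrow> nat"
    and D W :: "nat \<Rightarrow> nat \<Rightarrow> int" and L :: "nat \<Rightarrow> nat \<Rightarrow> nat"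
  assumes "orthogonal_design n u s D"
    and "weighing_matrix n k W"
    and "latin_square n L"
  shows "orthogonal_design (n * n) u (\<lambda>t. k * s t) (latin_block n L W D)"
proof -
  have Db: "\<And>i j. i<n \<Longrightarrow> j<n \<Longrightarrow> \<bar>D i j\<bar> \<le> int u" using assms(1) unfolding orthogonal_design_def by blast
  have Do: "\<And>x i j. i<n \<Longrightarrow> j<n \<Longrightarrow> (\<Sum>l<n. od_eval x (D i l) * od_eval x (D j l)) =
        (if i = j then (\<Sum>t\<in>{1..u}. real (s t) * (x t)\<^sup>2) else 0)" using assms(1) unfolding orthogonal_design_def by blast
  have Wv: "\<And>i j. i<n \<Longrightarrow> j<n \<Longrightarrow> W i j \<in> {-1,0,1}" using assms(2) unfolding weighing_matrix_def by blast
  have Wo: "\<And>i j. i<n \<Longrightarrow> j<n \<Longrightarrow> (\<Sum>l<n. W i l * W j l) = (if i = j then int k else 0)"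
    using assms(2) unfolding weighing_matrix_def by blast
  have Lr: "\<And>i. i<n \<Longrightarrow> bij_betw (\<lambda>j. L i j) {..<n} {..<n}" using assms(3) unfolding latin_square_def by blast
  have Lc: "\<And>j. j<n \<Longrightarrow> bij_betw (\<lambda>i. L i j) {..<n} {..<n}" using assms(3) unfolding latin_square_def by blast
  have Lb: "L i j < n" if "i<n" "j<n" for i j using bij_betwE[OF Lr[OF that(1)]] that(2) by blast
  have Dc: "(\<Sum>b<n. od_eval x (D b m) * od_eval x (D b m')) = (if m = m' then (\<Sum>t\<in>{1..u}. real (s t) * (x t)\<^sup>2) else 0)"
    if "m<n" "m'<n" for x m m'
    by (rule col_orth[OF _ that]) (rule Do)
  show ?thesis unfolding orthogonal_design_def
  proof (intro conjI allI impI)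
    fix r c assume rc: "r < n*n" "c < n*n"
    hence np: "n > 0" by (cases n) auto
    have q: "r div n < n" "c div n < n" "r mod n < n" "c mod n < n"
      using rc np by (auto simp: div_less_iff_less_mult)
    let ?m = "L (r div n) (c div n)"
    have m: "?m < n" using Lb q by blast
    have "\<bar>W (r mod n) ?m * D (c mod n) ?m\<bar> \<le> \<bar>D (c mod n) ?m\<bar>"
      using Wv[OF q(3) m] by (auto simp: abs_mult)
    also have "\<dots> \<le> int u" using Db[OF q(4) m] .
    finally show "\<bar>latin_block n L W D r c\<bar> \<le> int u" by (simp add: latin_block_def col_prod_def)
  next
    fix x :: "nat \<Rightarrow> real" and r r' assume rr: "r < n*n" "r' < n*n"
    hence np: "n > 0" by (cases n) auto
    define i a i' a' where "i = r div n" "a = r mod n" "i' = r' div n" "a' = r' mod n"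
    have q: "i<n" "a<n" "i'<n" "a'<n" using rr np by (auto simp: i_a_i'_a'_def div_less_iff_less_mult)
    define S where "S = (\<Sum>t\<in>{1..u}. real (s t) * (x t)\<^sup>2)"
    let ?ev = "od_eval x"
    have "(\<Sum>c<n*n. ?ev (latin_block n L W D r c) * ?ev (latin_block n L W D r' c))
       = (\<Sum>j<n. \<Sum>b<n. ?ev (latin_block n L W D r (j*n+b)) * ?ev (latin_block n L W D r' (j*n+b)))"
      by (rule split_sum)
    also have "\<dots> = (\<Sum>j<n. of_int (W a (L i j)) * of_int (W a' (L i' j)) *
        (\<Sum>b<n. ?ev (D b (L i j)) * ?ev (D b (L i' j))))"
    proof (rule sum.cong[OF refl])
      fix j assume j: "j \<in> {..<n}"
      show "(\<Sum>b<n. ?ev (latin_block n L W D r (j*n+b)) * ?ev (latin_block n L W D r' (j*n+b))) =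
         of_int (W a (L i j)) * of_int (W a' (L i' j)) * (\<Sum>b<n. ?ev (D b (L i j)) * ?ev (D b (L i' j)))"
        unfolding sum_distrib_left
      proof (rule sum.cong[OF refl])
        fix b assume b: "b \<in> {..<n}"
        have dm: "(j*n+b) div n = j" "(j*n+b) mod n = b" using b np by auto
        show "?ev (latin_block n L W D r (j*n+b)) * ?ev (latin_block n L W D r' (j*n+b)) =
          of_int (W a (L i j)) * of_int (W a' (L i' j)) * (?ev (D b (L i j)) * ?ev (D b (L i' j)))"
          unfolding latin_block_def col_prod_def dm i_a_i'_a'_def[symmetric]
          using ev_mult[OF Wv[OF q(2) Lb[OF q(1)]]] ev_mult[OF Wv[OF q(4) Lb[OF q(3)]]] j
          by (simp add: i_a_i'_a'_def q Lb)
      qed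
    qed
    also have "\<dots> = (\<Sum>j<n. of_int (W a (L i j)) * of_int (W a' (L i' j)) * (if L i j = L i' j then S else 0))"
      using Dc Lb q unfolding S_def by (intro sum.cong) auto
    also have "\<dots> = (if r = r' then (\<Sum>t\<in>{1..u}. real (k * s t) * (x t)\<^sup>2) else 0)"
    proof (cases "i = i'")
      case True
      have "(\<Sum>j<n. of_int (W a (L i j)) * of_int (W a' (L i' j)) * (if L i j = L i' j then S else 0))
          = S * (\<Sum>j<n. of_int (W a (L i j) * W a' (L i j)))" using True
        by (simp add: sum_distrib_left mult.commute mult.left_commute)
      also have "(\<Sum>j<n. (of_int (W a (L i j) * W a' (L i j)) :: real)) = (\<Sum>m<n. of_int (W a m * W a' m))"
        by (rule sum.reindex_bij_betw[OF Lr[OF q(1)], where g = "\<lambda>m. of_int (W a m * W a' m)"])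
      also have "\<dots> = of_int (\<Sum>m<n. W a m * W a' m)" by simp
      also have "\<dots> = (if a = a' then real k else 0)" using Wo[OF q(2) q(4)] by simp
      finally have e: "(\<Sum>j<n. of_int (W a (L i j)) * of_int (W a' (L i' j)) * (if L i j = L i' j then S else 0))
          = S * (if a = a' then real k else 0)" .
      have rr': "(r = r') = (a = a')" using True unfolding i_a_i'_a'_def
        by (metis div_mult_mod_eq)
      have "(\<Sum>t\<in>{1..u}. real (k * s t) * (x t)\<^sup>2) = real k * S"
        unfolding S_def by (simp add: sum_distrib_left mult.assoc)
      then show ?thesis using e rr' by simp
    next
      case False
      have "L i j \<noteq> L i' j" if "j<n" for j
        using bij_betw_imp_inj_on[OF Lc[OF that]] False q unfolding inj_on_def by blast
      hence "(\<Sum>j<n. of_int (W a (L i j)) * of_int (W a' (L i' j)) * (if L i j = L i' j then S else 0)) = (0::real)"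
        by (intro sum.neutral) auto
      moreover have "r \<noteq> r'" using False unfolding i_a_i'_a'_def by auto
      ultimately show ?thesis by simp
    qed
    finally show "(\<Sum>c<n*n. ?ev (latin_block n L W D r c) * ?ev (latin_block n L W D r' c)) =
        (if r = r' then (\<Sum>t\<in>{1..u}. real (k * s t) * (x t)\<^sup>2) else 0)" .
  qed
qed

end
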